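(* Let $\Sigma=\{0,1\}$ and $D=\Sigma(\Sigma\Sigma)^*\setminus\left(\Sigma^*11\Sigma^*\cup000\Sigma^*\cup101\Sigma^*\right)$. The map $\mathrm{val}_{\mathcal{F}c}$ is an increasing bijection from $(D,\prec)$ to $(\mathbb{Z},<)$.
   Context: Fibonacci numbers: $F_0=1$, $F_1=2$, $F_n=F_{n-1}+F_{n-2}$ for $n\ge2$. For a nonempty binary word $w=w_{k-1}\cdots w_0$ (digits indexed from the right), $\mathrm{val}_{\mathcal{F}c}(w)=\sum_{i=0}^{k-1}w_iF_i-w_{k-1}F_k$. Orders: $u<_{rad}v$ iff $|u|<|v|$, or $|u|=|v|$ and $u<_{lex}v$; $u<_{rev}v$ iff $|u|>|v|$, or $|u|=|v|$ and $u<_{lex}v$. The total order $\prec$ on $\Sigma^*$: $u\prec v$ iff either $u\in1\Sigma^*$ and $v\in0\Sigma^*$; or $u,v\in0\Sigma^*$ and $u<_{rad}v$; or $u,v\in1\Sigma^*$ and $u<_{rev}v$. *)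

theory Defs
  imports Main
begin

text \<open>Binary words over \<Sigma> = {0,1} are lists of naturals with entries in {0,1},
  written most significant digit first: the list [w_{k-1}, ..., w_0].\<close>

definition words :: "nat list set" where
  "words = {w. set w \<subseteq> {0, 1}}"

fun fibc :: "nat \<Rightarrow> int" where
  "fibc 0 = 1"
| "fibc (Suc 0) = 2"
| "fibc (Suc (Suc n)) = fibc (Suc n) + fibc n"

definition digit :: "nat list \<Rightarrow> nat \<Rightarrow> nat" where
  "digit w i = w ! (length w - 1 - i)"

definition valFc :: "nat list \<Rightarrow> int" where
  "valFc w = (\<Sum>i<length w. int (digit w i) * fibc i)
             - int (digit w (length w - 1)) * fibc (length w)"

definition factor :: "nat list \<Rightarrow> nat list \<Rightarrow> bool" where
  "factor x w \<longleftrightarrow> (\<exists>p s. w = p @ x @ s)"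

definition starts_with :: "nat list \<Rightarrow> nat list \<Rightarrow> bool" where
  "starts_with x w \<longleftrightarrow> (\<exists>s. w = x @ s)"

definition D :: "nat list set" where
  "D = {w \<in> words. odd (length w) \<and> \<not> factor [1,1] w
         \<and> \<not> starts_with [0,0,0] w \<and> \<not> starts_with [1,0,1] w}"

definition lex_less :: "nat list \<Rightarrow> nat list \<Rightarrow> bool" where
  "lex_less u v \<longleftrightarrow> (\<exists>p a b u' v'. u = p @ a # u' \<and> v = p @ b # v' \<and> a < b)"

definition rad_less :: "nat list \<Rightarrow> nat list \<Rightarrow> bool" where
  "rad_less u v \<longleftrightarrow> length u < length v \<or> (length u = length v \<and> lex_less u v)"

definition rev_less :: "nat list \<Rightarrow> nat list \<Rightarrow> bool" where
  "rev_less u v \<longleftrightarrow> length u > length v \<or> (length u = length v \<and> lex_less u v)"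

definition prec :: "nat list \<Rightarrow> nat list \<Rightarrow> bool" where
  "prec u v \<longleftrightarrow>
     (u \<in> words \<and> v \<in> words) \<and>
     ((starts_with [1] u \<and> starts_with [0] v)
      \<or> (starts_with [0] u \<and> starts_with [0] v \<and> rad_less u v)
      \<or> (starts_with [1] u \<and> starts_with [1] v \<and> rev_less u v))"

end

theory Submission
  imports Defs
begin

fun Nv :: "nat list \<Rightarrow> int" where
  "Nv [] = 0"
| "Nv (a # w) = int a * fibc (length w) + Nv w"

fun no11 :: "nat list \<Rightarrow> bool" where
  "no11 [] = True"
| "no11 [a] = True"
| "no11 (a # b # w) = (\<not> (a = 1 \<and> b = 1) \<and> no11 (b # w))"

lemma fib_rec: "fibc (n + 2) = fibc (n + 1) + fibc n"
  by (simp add: numeral_2_eq_2)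

lemma fibc_pos: "fibc n > 0"
  by (induction n rule: fibc.induct) auto

lemma fibc_ge: "fibc n \<ge> int n + 1"
proof (induction n rule: fibc.induct)
  case (3 n) then show ?case using fibc_pos[of n] by simp
qed auto

lemma fibc_Suc: "fibc n < fibc (Suc n)"
proof (cases n)
  case 0 then show ?thesis by simp
next
  case (Suc k) then show ?thesis using fibc_pos[of k] by simp
qed

lemma fibc_mono: "m \<le> n \<Longrightarrow> fibc m \<le> fibc n"
proof (induction n)
  case 0 then show ?case by simp
next
  case (Suc n) then show ?case using fibc_Suc[of n] by (cases "m = Suc n") auto
qed

lemma fibc_smono: "m < n \<Longrightarrow> fibc m < fibc n"
  using fibc_mono[of "Suc m" n] fibc_Suc[of m] by simp

lemma digit_sum: "(\<Sum>i<length w. int (digit w i) * fibc i) = Nv w"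
proof (induction w)
  case Nil then show ?case by simp
next
  case (Cons a w)
  have "(\<Sum>i<length w. int (digit (a # w) i) * fibc i) = (\<Sum>i<length w. int (digit w i) * fibc i)"
  proof (rule sum.cong)
    fix i assume "i \<in> {..<length w}"
    then have "length w - i = Suc (length w - 1 - i)" by auto
    then show "int (digit (a # w) i) * fibc i = int (digit w i) * fibc i"
      by (simp add: digit_def)
  qed simp
  moreover have "digit (a # w) (length w) = a" by (simp add: digit_def)
  ultimately show ?case using Cons by (simp add: lessThan_Suc)
qed

lemma valFc_Cons: "valFc (a # w) = Nv w + int a * (fibc (length w) - fibc (Suc (length w)))"
proof -
  have "digit (a # w) (length (a # w) - 1) = a" by (simp add: digit_def)
  then show ?thesis unfolding valFc_def digit_sum by (simp add: algebra_simps)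
qed

lemma Nv_nonneg: "Nv w \<ge> 0"
proof (induction w)
  case (Cons a w) then show ?case using fibc_pos[of "length w"] by simp
qed simp

lemma no11_Cons: "no11 (a # w) \<Longrightarrow> no11 w"
  by (cases w) auto

lemma no11_append: "no11 (p @ w) \<Longrightarrow> no11 w"
  by (induction p) (auto dest: no11_Cons)

lemma no11_0: "no11 (0 # w) = no11 w"
  by (cases w) auto

lemma zeck_bound: "set w \<subseteq> {0,1} \<Longrightarrow> no11 w \<Longrightarrow> Nv w < fibc (length w)"
proof (induction "length w" arbitrary: w rule: less_induct)
  case less
  show ?case
  proof (cases w)
    case Nil then show ?thesis by simp
  next
    case (Cons a w1)
    show ?thesis
    proof (cases w1)
      case Nil
      with Cons less.prems show ?thesis by auto
    next
      case (Cons b w2)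
      note w = \<open>w = a # w1\<close> Cons
      have a: "a = 0 \<or> a = 1" using less.prems w by auto
      then show ?thesis
      proof
        assume "a = 0"
        then have "Nv w = Nv w1" using w fibc_pos[of "length w2"] by simp
        also have "\<dots> < fibc (length w1)"
          using less.hyps[of w1] less.prems w by (auto dest: no11_Cons)
        also have "\<dots> \<le> fibc (length w)" using w fibc_mono[of "length w1" "length w"] by simp
        finally show ?thesis .
      next
        assume "a = 1"
        then have b: "b = 0" using less.prems w by auto
        have "Nv w2 < fibc (length w2)"
          using less.hyps[of w2] less.prems w by (auto dest: no11_Cons)
        then show ?thesis using w \<open>a = 1\<close> b fibc_pos[of "length w2"] by simp
      qed
    qed
  qed
qed

lemma zeck_exists: "0 \<le> x \<Longrightarrow> x < fibc k \<Longrightarrow> \<exists>w. length w = k \<and> set w \<subseteq> {0,1} \<and> no11 w \<and> Nv w = x"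
proof (induction k arbitrary: x rule: less_induct)
  case (less k)
  note IH = less
  show ?case
  proof (cases k)
    case 0 then show ?thesis using less.prems by (intro exI[of _ "[]"]) auto
  next
    case (Suc j)
    show ?thesis
    proof (cases j)
      case 0
      then have "x = 0 \<or> x = 1" using less.prems Suc by auto
      then show ?thesis
      proof
        assume "x = 0" then show ?thesis using Suc 0 by (intro exI[of _ "[0]"]) auto
      next
        assume "x = 1" then show ?thesis using Suc 0 by (intro exI[of _ "[1]"]) auto
      qed
    next
      case (Suc i)
      note k = \<open>k = Suc j\<close> Suc
      show ?thesis
      proof (cases "x < fibc j")
        case True
        then obtain w where "length w = j" "set w \<subseteq> {0,1}" "no11 w" "Nv w = x"
          using IH(1)[of j x] less.prems k by auto
        then show ?thesis using k by (intro exI[of _ "0 # w"]) (auto simp: no11_0)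
      next
        case False
        have "x - fibc j < fibc i" using less.prems k by simp
        then obtain w where "length w = i" "set w \<subseteq> {0,1}" "no11 w" "Nv w = x - fibc j"
          using IH(1)[of i "x - fibc j"] less.prems k False by auto
        then show ?thesis using k by (intro exI[of _ "1 # 0 # w"]) (auto simp: no11_0)
      qed
    qed
  qed
qed

lemma zeck_unique: "length u = length v \<Longrightarrow> set u \<subseteq> {0,1} \<Longrightarrow> set v \<subseteq> {0,1}
  \<Longrightarrow> no11 u \<Longrightarrow> no11 v \<Longrightarrow> Nv u = Nv v \<Longrightarrow> u = v"
proof (induction u arbitrary: v)
  case Nil then show ?case by simp
next
  case (Cons a u)
  then obtain b v' where v: "v = b # v'" by (cases v) auto
  have lt: "Nv (0 # x) < Nv (1 # y)" if "length x = length y" "set x \<subseteq> {0,1}" "no11 (0 # x)" for x y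
    using zeck_bound[of x] that Nv_nonneg[of y] by (auto simp: no11_0)
  have ab: "a \<in> {0,1}" "b \<in> {0,1}" using Cons.prems v by auto
  show ?case
  proof (cases "a = b")
    case True
    then show ?thesis using Cons v by (auto dest: no11_Cons)
  next
    case False
    then have "(a = 0 \<and> b = 1) \<or> (a = 1 \<and> b = 0)" using ab by auto
    then show ?thesis using lt[of u v'] lt[of v' u] Cons.prems v by auto
  qed
qed


lemma factor_Nil: "factor x [] \<longleftrightarrow> x = []"
  by (auto simp: factor_def)

lemma factor_Cons: "factor x (a # w) \<longleftrightarrow> starts_with x (a # w) \<or> factor x w"
  unfolding factor_def starts_with_def
  by (auto simp: Cons_eq_append_conv)

lemma factor11: "factor [1,1] w \<longleftrightarrow> \<not> no11 w"
  by (induction w rule: no11.induct) (auto simp: factor_Cons factor_Nil starts_with_def)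

lemma factor11': "factor [Suc 0, Suc 0] w \<longleftrightarrow> \<not> no11 w"
  using factor11 by simp

lemma Nv_append: "length x = length y \<Longrightarrow> Nv (p @ x) - Nv (p @ y) = Nv x - Nv y"
  by (induction p) auto

lemma val0: "valFc (0 # r) = Nv r"
  by (simp add: valFc_Cons)

lemma val1: "valFc (1 # r) = Nv r + fibc (length r) - fibc (Suc (length r))"
  by (simp add: valFc_Cons)

lemma D_nonempty: "w \<in> D \<Longrightarrow> w \<noteq> []"
  by (auto simp: D_def)

lemma class0:
  assumes "0 # r \<in> D" "r \<noteq> []"
  shows "\<exists>m. length r = 2*m+2 \<and> fibc (2*m) \<le> valFc (0 # r) \<and> valFc (0 # r) < fibc (2*m+2)"
proof -
  have r: "set r \<subseteq> {0,1}" "no11 r" "even (length r)"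
    using assms by (auto simp: D_def words_def factor11 factor11' no11_0)
  obtain a r1 where r1: "r = a # r1" using assms(2) by (cases r) auto
  then obtain b s where "r1 = b # s" using r(3) by (cases r1) auto
  with r1 have rs: "r = a # b # s" by simp
  have ab: "\<not> (a = 0 \<and> b = 0)" using assms(1) rs by (auto simp: D_def starts_with_def)
  obtain m where m: "length s = 2*m" using r(3) rs by (auto elim!: evenE)
  have bnd: "Nv r < fibc (length r)" using zeck_bound r by blast
  have s: "set s \<subseteq> {0,1}" using r rs by auto
  have "fibc (2*m) \<le> Nv r"
  proof (cases "a = 0")
    case True then have "b = 1" using ab r rs by auto
    then show ?thesis using True rs m Nv_nonneg[of s] by simp
  next
    case False then have "a = 1" using r rs by auto
    then show ?thesis using rs m Nv_nonneg[of s] fibc_mono[of "2*m" "Suc (2*m)"] Nv_nonneg[of "b#s"]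
      by simp
  qed
  then show ?thesis using bnd rs m val0 by (intro exI[of _ m]) auto
qed

lemma class1:
  assumes "1 # r \<in> D" "r \<noteq> []"
  shows "\<exists>m. length r = 2*m+2 \<and> - fibc (2*m+1) \<le> valFc (1 # r) \<and> valFc (1 # r) < fibc (2*m) - fibc (2*m+1)"
proof -
  have r: "set r \<subseteq> {0,1}" "no11 (1 # r)" "even (length r)"
    using assms by (auto simp: D_def words_def factor11 factor11')
  obtain a r1 where r1: "r = a # r1" using assms(2) by (cases r) auto
  then obtain b s where "r1 = b # s" using r(3) by (cases r1) auto
  with r1 have rs: "r = a # b # s" by simp
  have a: "a = 0" using r rs by auto
  have b: "b = 0" using assms(1) rs a r by (auto simp: D_def starts_with_def)
  obtain m where m: "length s = 2*m" using r(3) rs by (auto elim!: evenE)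
  have s: "set s \<subseteq> {0,1}" "no11 s" using r rs a b by (auto simp: no11_0)
  have bnd: "Nv s < fibc (length s)" using zeck_bound s by blast
  have v: "valFc (1 # r) = Nv s - fibc (2*m+1)"
    using val1[of r] rs a b m by (simp add: numeral_2_eq_2)
  show ?thesis using v bnd m Nv_nonneg[of s] rs by (intro exI[of _ m]) auto
qed

lemma D_hd: "w \<in> D \<Longrightarrow> \<exists>r. w = 0 # r \<or> w = 1 # r"
  by (cases w) (auto simp: D_def words_def)

lemma val_single: "valFc [0] = 0" "valFc [1] = -1" "valFc [Suc 0] = -1"
  by (simp_all add: valFc_Cons)

lemma fib_diff: "fibc (2*m) - fibc (2*m+1) \<le> -1"
  using fibc_Suc[of "2*m"] by simp

lemma L1: "1 # r \<in> D \<Longrightarrow> 0 # r' \<in> D \<Longrightarrow> valFc (1 # r) < valFc (0 # r')"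
proof -
  assume u: "1 # r \<in> D" and v: "0 # r' \<in> D"
  have "valFc (1 # r) < 0"
  proof (cases "r = []")
    case True then show ?thesis by (simp add: val_single)
  next
    case False
    then obtain m where "valFc (1 # r) < fibc (2*m) - fibc (2*m+1)" using class1[OF u] by blast
    then show ?thesis using fib_diff[of m] by simp
  qed
  moreover have "valFc (0 # r') \<ge> 0" using val0 Nv_nonneg by simp
  ultimately show ?thesis by simp
qed

lemma L2: "0 # r \<in> D \<Longrightarrow> 0 # r' \<in> D \<Longrightarrow> length r < length r' \<Longrightarrow> valFc (0 # r) < valFc (0 # r')"
proof -
  assume u: "0 # r \<in> D" and v: "0 # r' \<in> D" and l: "length r < length r'"
  then obtain m' where m': "length r' = 2*m'+2" "fibc (2*m') \<le> valFc (0 # r')"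
    using class0[OF v] by force
  show ?thesis
  proof (cases "r = []")
    case True then show ?thesis using m' fibc_pos[of "2*m'"] by (simp add: val_single)
  next
    case False
    then obtain m where m: "length r = 2*m+2" "valFc (0 # r) < fibc (2*m+2)"
      using class0[OF u] by force
    have "2*m+2 \<le> 2*m'" using m m' l by simp
    then show ?thesis using m m' fibc_mono[of "2*m+2" "2*m'"] by simp
  qed
qed

lemma L3: "1 # r \<in> D \<Longrightarrow> 1 # r' \<in> D \<Longrightarrow> length r' < length r \<Longrightarrow> valFc (1 # r) < valFc (1 # r')"
proof -
  assume u: "1 # r \<in> D" and v: "1 # r' \<in> D" and l: "length r' < length r"
  then have "r \<noteq> []" by auto
  then obtain m where m: "length r = 2*m+2" "valFc (1 # r) < fibc (2*m) - fibc (2*m+1)"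
    using class1[OF u] by force
  show ?thesis
  proof (cases "r' = []")
    case True then show ?thesis using m fib_diff[of m] by (simp add: val_single)
  next
    case False
    then obtain m' where m': "length r' = 2*m'+2" "- fibc (2*m'+1) \<le> valFc (1 # r')"
      using class1[OF v] by force
    obtain j where j: "m = Suc j" "m' \<le> j" using m m' l by (cases m) auto
    have "fibc (2*m) - fibc (2*m+1) = - fibc (2*j+1)"
      using j fib_rec[of "2*j+1"] by (simp add: algebra_simps)
    moreover have "fibc (2*m'+1) \<le> fibc (2*j+1)" using j fibc_mono by simp
    ultimately show ?thesis using m m' by simp
  qed
qed

lemma lex_Nv:
  assumes "lex_less u v" "length u = length v" "set u \<subseteq> {0,1}" "set v \<subseteq> {0,1}" "no11 u"
  shows "Nv u < Nv v"
proof -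
  obtain p a b u' v' where uv: "u = p @ a # u'" "v = p @ b # v'" "a < b"
    using assms(1) unfolding lex_less_def by blast
  then have ab: "a = 0" "b = 1" using assms by auto
  have l: "length u' = length v'" using uv assms(2) by simp
  have "no11 (a # u')" using assms(5) uv no11_append by blast
  then have "Nv u' < fibc (length u')" using zeck_bound[of u'] assms uv ab by (auto simp: no11_0)
  then have "Nv (a # u') < Nv (b # v')" using ab l Nv_nonneg[of v'] by simp
  then show ?thesis using Nv_append[of "a # u'" "b # v'" p] uv l by simp
qed

lemma L4:
  assumes "c # r \<in> D" "c # r' \<in> D" "length r = length r'" "lex_less (c # r) (c # r')"
  shows "valFc (c # r) < valFc (c # r')"
proof -
  have "Nv (c # r) < Nv (c # r')"
    using lex_Nv[OF assms(4)] assms by (auto simp: D_def words_def factor11 factor11')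
  then show ?thesis using assms(3) by (simp add: valFc_Cons)
qed

lemma D_cases:
  assumes "w \<in> D"
  obtains r where "w = 0 # r" | r where "w = 1 # r"
  using D_hd[OF assms] by blast

lemma sw1: "starts_with [c] w \<longleftrightarrow> (\<exists>r. w = c # r)"
  by (simp add: starts_with_def)

lemma mono_D: "u \<in> D \<Longrightarrow> v \<in> D \<Longrightarrow> prec u v \<Longrightarrow> valFc u < valFc v"
proof -
  assume u: "u \<in> D" and v: "v \<in> D" and p: "prec u v"
  then have p': "(\<exists>r r'. u = 1 # r \<and> v = 0 # r')
     \<or> (\<exists>r r'. u = 0 # r \<and> v = 0 # r' \<and> rad_less u v)
     \<or> (\<exists>r r'. u = 1 # r \<and> v = 1 # r' \<and> rev_less u v)"
    unfolding prec_def sw1 by blast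
  show ?thesis
  proof (cases "\<exists>r r'. u = 1 # r \<and> v = 0 # r'")
    case True then show ?thesis using L1 u v by blast
  next
    case F1: False
    show ?thesis
    proof (cases "\<exists>r r'. u = 0 # r \<and> v = 0 # r' \<and> rad_less u v")
      case True
      then obtain r r' where e: "u = 0 # r" "v = 0 # r'" "rad_less u v" by blast
      then have "length r < length r' \<or> (length r = length r' \<and> lex_less u v)"
        unfolding rad_less_def by simp
      then show ?thesis using L2[of r r'] L4[of 0 r r'] u v e by auto
    next
      case False
      then obtain r r' where e: "u = 1 # r" "v = 1 # r'" "rev_less u v" using p' F1 by blast
      then have "length r' < length r \<or> (length r = length r' \<and> lex_less u v)"
        unfolding rev_less_def by simp
      then show ?thesis using L3[of r r'] L4[of 1 r r'] u v e by auto
    qed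
  qed
qed

lemma inj_D: "inj_on valFc D"
proof (rule inj_onI)
  fix u v assume u: "u \<in> D" and v: "v \<in> D" and e: "valFc u = valFc v"
  have main: "u = v" if uv: "u = c # r" "v = c # r'" for c r r'
  proof -
    have len: "length r = length r'"
    proof (rule ccontr)
      assume "length r \<noteq> length r'"
      then consider "length r < length r'" | "length r' < length r" by linarith
      then show False
      proof cases
        case 1 then show False using L2[of r r'] L3[of r' r] u v uv e D_hd[OF u]
          by (cases "c = 0") auto
      next
        case 2 then show False using L2[of r' r] L3[of r r'] u v uv e D_hd[OF u]
          by (cases "c = 0") auto
      qed
    qed
    have "Nv u = Nv v" using uv e len by (simp add: valFc_Cons)
    then show "u = v" using zeck_unique[of u v] u v uv len
      by (auto simp: D_def words_def factor11 factor11')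
  qed
  show "u = v"
  proof (rule D_cases[OF u])
    fix r assume ur: "u = 0 # r" show ?thesis
    proof (rule D_cases[OF v])
      fix r' assume "v = 0 # r'" then show ?thesis using main ur by blast
    next
      fix r' assume "v = 1 # r'" then show ?thesis using L1[of r' r] u v e ur by simp
    qed
  next
    fix r assume ur: "u = 1 # r" show ?thesis
    proof (rule D_cases[OF v])
      fix r' assume "v = 0 # r'" then show ?thesis using L1[of r r'] u v e ur by simp
    next
      fix r' assume "v = 1 # r'" then show ?thesis using main ur by blast
    qed
  qed
qed

lemma surj_pos: "0 \<le> x \<Longrightarrow> x < fibc (2*m) \<Longrightarrow> \<exists>w\<in>D. valFc w = x"
proof (induction m arbitrary: x)
  case 0 then have "x = 0" by simp
  then show ?case by (intro bexI[of _ "[0]"]) (auto simp: val_single D_def words_def factor11 factor11' starts_with_def)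
next
  case (Suc m)
  show ?case
  proof (cases "x < fibc (2*m)")
    case True then show ?thesis using Suc by blast
  next
    case False
    then obtain r where r: "length r = 2*m+2" "set r \<subseteq> {0,1}" "no11 r" "Nv r = x"
      using zeck_exists[of x "2*m+2"] Suc.prems by auto
    have "\<not> starts_with [0,0,0] (0 # r)"
    proof
      assume "starts_with [0,0,0] (0 # r)"
      then obtain s where "r = 0 # 0 # s" by (auto simp: starts_with_def)
      then show False using r False zeck_bound[of s] by (auto simp: no11_0)
    qed
    then have "0 # r \<in> D" using r by (auto simp: D_def words_def factor11 factor11' no11_0 starts_with_def)
    then show ?thesis using r val0 by blast
  qed
qed

lemma surj_neg: "- fibc (2*m+1) \<le> x \<Longrightarrow> x < 0 \<Longrightarrow> \<exists>w\<in>D. valFc w = x"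
proof (induction m arbitrary: x)
  case 0 then have "-2 \<le> x" "x < 0" by (simp_all add: numeral_2_eq_2)
  then have "x = -1 \<or> x = -2" by presburger
  then show ?case
  proof
    assume "x = -1" then show ?thesis
      by (intro bexI[of _ "[1]"]) (auto simp: val_single D_def words_def factor11 factor11' starts_with_def)
  next
    assume x: "x = -2"
    have "valFc [1,0,0] = -2" by (simp add: valFc_Cons)
    moreover have "[1,0,0] \<in> D" by (auto simp: D_def words_def factor11 factor11' starts_with_def)
    ultimately show ?thesis using x by blast
  qed
next
  case (Suc m)
  show ?case
  proof (cases "- fibc (2*m+1) \<le> x")
    case True then show ?thesis using Suc by blast
  next
    case False
    have e: "2*Suc m+1 = Suc (Suc (2*m+1))" "2*m+2 = Suc (2*m+1)" by simp_all
    have f: "fibc (2*Suc m+1) = fibc (2*m+2) + fibc (2*m+1)" using e by (metis fibc.simps(3))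
    have "0 \<le> x + fibc (2*Suc m+1)" "x + fibc (2*Suc m+1) < fibc (2*m+2)"
      using Suc.prems False f by linarith+
    then obtain t where t: "length t = 2*m+2" "set t \<subseteq> {0,1}" "no11 t" "Nv t = x + fibc (2*Suc m+1)"
      using zeck_exists[of "x + fibc (2*Suc m+1)" "2*m+2"] by auto
    have "1 # 0 # 0 # t \<in> D" using t by (auto simp: D_def words_def factor11 factor11' no11_0 starts_with_def)
    moreover have "valFc (1 # 0 # 0 # t) = Nv t - fibc (Suc (length t))"
      by (simp add: valFc_Cons)
    moreover have "fibc (Suc (length t)) = fibc (2*Suc m+1)" using t e by simp
    ultimately have "1 # 0 # 0 # t \<in> D \<and> valFc (1 # 0 # 0 # t) = x" using t by simp
    then show ?thesis by blast
  qed
qed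

theorem lemma6p7:
  shows "bij_betw valFc D (UNIV :: int set)
         \<and> (\<forall>u\<in>D. \<forall>v\<in>D. prec u v \<longrightarrow> valFc u < valFc v)"
proof (intro conjI ballI impI)
  have "x \<in> valFc ` D" for x
  proof (cases "x \<ge> 0")
    case True
    have "x < fibc (2 * nat x)" using fibc_ge[of "2 * nat x"] True by simp
    then show ?thesis using surj_pos True by blast
  next
    case False
    have "- fibc (2 * nat (-x) + 1) \<le> x" using fibc_ge[of "2 * nat (-x) + 1"] False by simp
    then show ?thesis using surj_neg False by force
  qed
  then show "bij_betw valFc D UNIV" using inj_D by (auto simp: bij_betw_def)
qed (rule mono_D)

end
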